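(* Let $\alpha\ge0$ and $\mu\ge0$ be fixed. For every uniformly continuous bounded function $g$ on $[0,\infty)$ and every compact set $A\subset[0,\infty)$, $T_n(g;x)\to g(x)$ uniformly in $x\in A$ as $n\to\infty$.
   Context: For $\mu>-\tfrac12$ define $\gamma_\mu(2k)=\dfrac{2^{2k}k!\,\Gamma(k+\mu+1/2)}{\Gamma(\mu+1/2)}$ and $\gamma_\mu(2k+1)=\dfrac{2^{2k+1}k!\,\Gamma(k+\mu+3/2)}{\Gamma(\mu+1/2)}$, $k\ge0$; $e_\mu(x)=\sum_{k\ge0} x^k/\gamma_\mu(k)$; $\theta_k=0$ if $k$ is even and $\theta_k=1$ if $k$ is odd. Let $h_k^\mu(\xi,\alpha)=\gamma_\mu(k)\sum_{j=0}^{\lfloor k/2\rfloor}\dfrac{\alpha^j\xi^{k-2j}}{j!\,\gamma_\mu(k-2j)}$. For $\alpha\ge0,\mu\ge0$, $n\in\mathbb{N}$ and $x\in[0,\infty)$ define $$T_n(f;x)=\frac{1}{e^{\alpha x^2}e_\mu(nx)}\sum_{k=0}^\infty \frac{h_k^\mu(n,\alpha)}{\gamma_\mu(k)}x^k f\!\left(\frac{k+2\mu\theta_k}{n}\right).$$ *)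

theory Defs
  imports "HOL-Analysis.Analysis"
begin

definition gam :: "real \<Rightarrow> nat \<Rightarrow> real" where
  "gam \<mu> k = (if even k
     then 2 ^ k * fact (k div 2) * Gamma (real (k div 2) + \<mu> + 1/2) / Gamma (\<mu> + 1/2)
     else 2 ^ k * fact (k div 2) * Gamma (real (k div 2) + \<mu> + 3/2) / Gamma (\<mu> + 1/2))"

definition e_mu :: "real \<Rightarrow> real \<Rightarrow> real" where
  "e_mu \<mu> x = (\<Sum>k. x ^ k / gam \<mu> k)"

definition theta :: "nat \<Rightarrow> real" where
  "theta k = (if even k then 0 else 1)"

definition hpoly :: "real \<Rightarrow> nat \<Rightarrow> real \<Rightarrow> real \<Rightarrow> real" where
  "hpoly \<mu> k \<xi> \<alpha> = gam \<mu> k *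
     (\<Sum>j = 0..k div 2. \<alpha> ^ j * \<xi> ^ (k - 2 * j) / (fact j * gam \<mu> (k - 2 * j)))"

definition Top :: "real \<Rightarrow> real \<Rightarrow> nat \<Rightarrow> (real \<Rightarrow> real) \<Rightarrow> real \<Rightarrow> real" where
  "Top \<alpha> \<mu> n f x = (1 / (exp (\<alpha> * x\<^sup>2) * e_mu \<mu> (real n * x))) *
     (\<Sum>k. hpoly \<mu> k (real n) \<alpha> / gam \<mu> k * x ^ k * f ((real k + 2 * \<mu> * theta k) / real n))"

end

theory Submission
  imports Defs
begin

definition sq :: "real \<Rightarrow> nat \<Rightarrow> real" where
  "sq \<mu> m = real m + 2 * \<mu> * theta m"

lemma Gpos: "(\<mu>::real) \<ge> 0 \<Longrightarrow> Gamma (\<mu> + 1/2) > 0"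
  by simp

lemma gam_pos: assumes "\<mu> \<ge> 0" shows "gam \<mu> k > 0"
proof -
  have "Gamma (real (k div 2) + \<mu> + 1/2) > 0" "Gamma (real (k div 2) + \<mu> + 3/2) > 0"
       "Gamma (\<mu> + 1/2) > 0" using assms by auto
  then show ?thesis unfolding gam_def by auto
qed

lemma gam_0: assumes "\<mu> \<ge> 0" shows "gam \<mu> 0 = 1"
proof -
  have "Gamma (\<mu> + 1/2) > 0" using assms by simp
  then show ?thesis unfolding gam_def by simp
qed

lemma Gamma_p1: "z > 0 \<Longrightarrow> Gamma (z + 1) = z * Gamma (z::real)"
  by (rule Gamma_plus1) (auto dest: nonpos_Ints_nonpos)

lemma gam_even: "gam \<mu> (2*j) = 2^(2*j) * fact j * Gamma (real j + \<mu> + 1/2) / Gamma (\<mu> + 1/2)"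
  unfolding gam_def by simp

lemma gam_odd: "gam \<mu> (2*j+1) = 2^(2*j+1) * fact j * Gamma (real j + \<mu> + 3/2) / Gamma (\<mu> + 1/2)"
  unfolding gam_def by simp

lemma gam_Suc: assumes "\<mu> \<ge> 0"
  shows "gam \<mu> (Suc m) = sq \<mu> (Suc m) * gam \<mu> m"
proof (cases "even m")
  case True
  then obtain j where m: "m = 2 * j" by blast
  have G: "Gamma (real j + \<mu> + 3/2) = (real j + \<mu> + 1/2) * Gamma (real j + \<mu> + 1/2)"
    using Gamma_p1[of "real j + \<mu> + 1/2"] assms by (simp add: add.assoc)
  have sq: "sq \<mu> (Suc m) = 2 * real j + 1 + 2 * \<mu>" unfolding sq_def theta_def m by simp
  have A: "\<And>G0 G1 p f. 
     p * 2 * f * ((real j + \<mu> + 1/2) * G1) / G0 = (2 * real j + 1 + 2 * \<mu>) * (p * f * G1 / G0)"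
    by (simp add: divide_simps)
  show ?thesis unfolding sq using gam_odd[of \<mu> j] gam_even[of \<mu> j] A G m by simp
next
  case False
  then obtain j where m: "m = 2 * j + 1" using oddE by blast
  have "real (Suc j) + \<mu> + 1/2 = real j + \<mu> + 3/2" by simp
  then have G: "Gamma (real (Suc j) + \<mu> + 1/2) = Gamma (real j + \<mu> + 3/2)"
    by (simp only:)
  have sq: "sq \<mu> (Suc m) = 2 * real j + 2" unfolding sq_def theta_def m by simp
  have e: "Suc m = 2 * Suc j" using m by simp
  have A: "\<And>G0 G3 p f. p * 4 * ((real j + 1) * f) * G3 / G0 = (2 * real j + 2) * (p * 2 * f * G3 / G0)"
    by (simp add: field_simps)
  have "gam \<mu> (Suc m) = gam \<mu> (2*Suc j)" using e by simp
  also have "\<dots> = 2^(2*Suc j)*fact (Suc j)*Gamma(real (Suc j)+\<mu>+1/2)/Gamma (\<mu> + 1/2)"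
    by (rule gam_even)
  also have "\<dots> = (2*real j+2) * (2^(2*j+1)*fact j*Gamma(real j+\<mu>+3/2)/Gamma (\<mu> + 1/2))"
    unfolding G by (simp add: field_simps)
  also have "\<dots> = sq \<mu> (Suc m) * gam \<mu> m" using sq m gam_odd by simp
  finally show ?thesis .
qed

lemma sq_nonneg: "\<mu> \<ge> 0 \<Longrightarrow> sq \<mu> m \<ge> real m"
  unfolding sq_def theta_def by auto

lemma gam_ge_fact: assumes "\<mu> \<ge> 0" shows "gam \<mu> m \<ge> fact m"
proof (induction m)
  case 0 then show ?case using gam_0[OF assms] by simp
next
  case (Suc m)
  have "fact (Suc m) = real (Suc m) * fact m" by simp
  also have "\<dots> \<le> sq \<mu> (Suc m) * gam \<mu> m"
    by (rule mult_mono) (use Suc sq_nonneg[OF assms, of "Suc m"] gam_pos[OF assms, of m] in auto)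
  finally show ?case using gam_Suc[OF assms] by simp
qed


lemma theta_0: "theta 0 = 0" unfolding theta_def by simp
lemma sq_0: "sq \<mu> 0 = 0" unfolding sq_def theta_def by simp

lemma b_summable: assumes "\<mu> \<ge> 0" "z \<ge> 0"
  shows "summable (\<lambda>m. z^m / gam \<mu> m)"
proof (rule summable_comparison_test')
  show "summable (\<lambda>m. inverse (fact m) * z^m)" by (rule summable_exp)
  fix m :: nat
  have "norm (z^m / gam \<mu> m) = z^m / gam \<mu> m" using assms gam_pos[OF assms(1), of m] by simp
  also have "\<dots> \<le> z^m / fact m"
    by (rule divide_left_mono) (use assms gam_ge_fact[OF assms(1), of m] gam_pos[OF assms(1), of m] in auto)
  finally show "norm (z^m / gam \<mu> m) \<le> inverse (fact m) * z^m" by (simp add: field_simps)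
qed

lemma b_sums: assumes "\<mu> \<ge> 0" "z \<ge> 0"
  shows "(\<lambda>m. z^m / gam \<mu> m) sums e_mu \<mu> z"
  unfolding e_mu_def by (rule summable_sums[OF b_summable[OF assms]])

lemma b_shift: assumes "\<mu> \<ge> 0"
  shows "z^(Suc m) / gam \<mu> (Suc m) * sq \<mu> (Suc m) = z * (z^m / gam \<mu> m)"
proof -
  have "sq \<mu> (Suc m) > 0" using sq_nonneg[OF assms, of "Suc m"] by simp
  then show ?thesis using gam_Suc[OF assms, of m] gam_pos[OF assms, of m] by (simp add: field_simps)
qed

lemma b1: assumes "\<mu> \<ge> 0" "z \<ge> 0"
  shows "(\<lambda>m. z^m / gam \<mu> m * sq \<mu> m) sums (z * e_mu \<mu> z)"
proof -
  have "(\<lambda>m. z^(Suc m) / gam \<mu> (Suc m) * sq \<mu> (Suc m)) sums (z * e_mu \<mu> z)"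
    unfolding b_shift[OF assms(1)] by (rule sums_mult[OF b_sums[OF assms]])
  then show ?thesis by (subst (asm) sums_Suc_iff) (simp add: sq_0)
qed

lemma sq_diff: assumes "\<mu> \<ge> 0" shows "\<bar>sq \<mu> (Suc m) - sq \<mu> m\<bar> \<le> 1 + 2 * \<mu>"
  using assms unfolding sq_def theta_def by auto

lemma b2: assumes "\<mu> \<ge> 0" "z \<ge> 0"
  shows "\<exists>V. (\<lambda>m. z^m / gam \<mu> m * (sq \<mu> m - z)^2) sums V \<and> V \<le> (1 + 2*\<mu>) * z * e_mu \<mu> z"
proof -
  define b where "b m = z^m / gam \<mu> m" for m
  define c where "c m = sq \<mu> (Suc m) - sq \<mu> m" for m
  have bnn: "b m \<ge> 0" for m unfolding b_def using assms gam_pos[OF assms(1), of m] by simp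
  have bs: "b sums e_mu \<mu> z" unfolding b_def by (rule b_sums[OF assms])
  have sbc: "summable (\<lambda>m. b m * c m)"
  proof (rule summable_comparison_test')
    show "summable (\<lambda>m. (1 + 2*\<mu>) * b m)" using bs by (intro summable_mult) (auto simp: sums_iff)
    fix m
    show "norm (b m * c m) \<le> (1 + 2*\<mu>) * b m"
      using bnn[of m] sq_diff[OF assms(1), of m] unfolding c_def
      by (simp add: abs_mult mult.commute mult_left_mono)
  qed
  define C where "C = suminf (\<lambda>m. b m * c m)"
  have Cle: "C \<le> (1 + 2*\<mu>) * e_mu \<mu> z"
  proof -
    have le: "b m * c m \<le> (1 + 2*\<mu>) * b m" for m
    proof -
      have "c m \<le> 1 + 2*\<mu>" using sq_diff[OF assms(1), of m] unfolding c_def by linarith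
      then have "b m * c m \<le> b m * (1 + 2*\<mu>)" by (rule mult_left_mono[OF _ bnn])
      then show ?thesis by (simp add: mult.commute)
    qed
    have "summable (\<lambda>m. (1 + 2*\<mu>) * b m)" using bs by (intro summable_mult) (auto simp: sums_iff)
    then have "C \<le> suminf (\<lambda>m. (1 + 2*\<mu>) * b m)" unfolding C_def
      using suminf_le[OF le sbc] by blast
    also have "\<dots> = (1 + 2*\<mu>) * e_mu \<mu> z" using bs by (simp add: sums_iff suminf_mult)
    finally show ?thesis .
  qed
  have b1': "(\<lambda>m. b m * sq \<mu> m) sums (z * e_mu \<mu> z)" unfolding b_def by (rule b1[OF assms])
  have "(\<lambda>m. z * (b m * sq \<mu> m) + z * (b m * c m)) sums (z * (z * e_mu \<mu> z) + z * C)"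
    by (intro sums_add sums_mult b1' summable_sums) (use sbc C_def in auto)
  moreover have "b (Suc m) * sq \<mu> (Suc m)^2 = z * (b m * sq \<mu> m) + z * (b m * c m)" for m
  proof -
    have "b (Suc m) * sq \<mu> (Suc m)^2 = (b (Suc m) * sq \<mu> (Suc m)) * sq \<mu> (Suc m)"
      by (simp add: power2_eq_square)
    also have "\<dots> = z * b m * (sq \<mu> m + c m)" using b_shift[OF assms(1), of z m]
      unfolding b_def c_def by simp
    finally show ?thesis by (simp add: algebra_simps)
  qed
  ultimately have "(\<lambda>m. b (Suc m) * sq \<mu> (Suc m)^2) sums (z * (z * e_mu \<mu> z) + z * C)" by simp
  then have f2: "(\<lambda>m. b m * sq \<mu> m^2) sums (z * (z * e_mu \<mu> z) + z * C)"
    by (subst (asm) sums_Suc_iff) (simp add: sq_0)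
  have S: "(\<lambda>m. b m * sq \<mu> m^2 - 2 * z * (b m * sq \<mu> m) + z^2 * b m) sums
        ((z * (z * e_mu \<mu> z) + z * C) - 2 * z * (z * e_mu \<mu> z) + z^2 * e_mu \<mu> z)"
    by (intro sums_add sums_diff sums_mult f2 b1' bs)
  have e1: "(\<lambda>m. b m * sq \<mu> m^2 - 2 * z * (b m * sq \<mu> m) + z^2 * b m) = (\<lambda>m. b m * (sq \<mu> m - z)^2)"
    by (rule ext) (simp add: power2_eq_square algebra_simps)
  have e2: "(z * (z * e_mu \<mu> z) + z * C) - 2 * z * (z * e_mu \<mu> z) + z^2 * e_mu \<mu> z = z * C"
    by (simp add: power2_eq_square algebra_simps)
  from S have "(\<lambda>m. b m * (sq \<mu> m - z)^2) sums (z * C)" unfolding e1 e2 .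
  moreover have "z * C \<le> (1 + 2*\<mu>) * z * e_mu \<mu> z"
    using mult_left_mono[OF Cle assms(2)] by (simp add: algebra_simps)
  ultimately show ?thesis unfolding b_def by blast
qed

lemma a0: "(\<lambda>j. y^j / fact j) sums exp (y::real)"
  using exp_converges[of y] by (simp add: divide_inverse mult.commute)

lemma a1: "(\<lambda>j. y^j / fact j * real j) sums (y * exp (y::real))"
proof -
  have "(\<lambda>j. y^(Suc j) / fact (Suc j) * real (Suc j)) = (\<lambda>j. y * (y^j / fact j))"
  proof (rule ext)
    fix j
    have A: "\<And>r F. r > 0 \<Longrightarrow> F > 0 \<Longrightarrow> y^(Suc j)/(r*F)*r = y*(y^j/F)" by (simp add: field_simps)
    show "y^(Suc j) / fact (Suc j) * real (Suc j) = y * (y^j / fact j)"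
      using A[of "real (Suc j)" "fact j"] by (simp only: fact_Suc of_nat_mult) simp
  qed
  moreover have "(\<lambda>j. y * (y^j / fact j)) sums (y * exp y)" by (rule sums_mult[OF a0])
  ultimately have "(\<lambda>j. y^(Suc j) / fact (Suc j) * real (Suc j)) sums (y * exp y)" by simp
  then show ?thesis by (subst (asm) sums_Suc_iff) simp
qed

lemma a2: "(\<lambda>j. y^j / fact j * real j^2) sums (y * (y * exp y + exp (y::real)))"
proof -
  have "(\<lambda>j. y^(Suc j) / fact (Suc j) * real (Suc j)^2) = (\<lambda>j. y * (y^j / fact j * real j + y^j / fact j))"
  proof (rule ext)
    fix j
    have A: "\<And>r F. r > 0 \<Longrightarrow> F > 0 \<Longrightarrow> y^(Suc j)/(r*F)*r^2 = y*(y^j/F*(r-1) + y^j/F)"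
      by (simp add: field_simps power2_eq_square)
    show "y^(Suc j) / fact (Suc j) * real (Suc j)^2 = y * (y^j / fact j * real j + y^j / fact j)"
      using A[of "real (Suc j)" "fact j"] by (simp only: fact_Suc of_nat_mult) simp
  qed
  moreover have "(\<lambda>j. y * (y^j / fact j * real j + y^j / fact j)) sums (y * (y * exp y + exp y))"
    by (intro sums_mult sums_add a0 a1)
  ultimately have "(\<lambda>j. y^(Suc j) / fact (Suc j) * real (Suc j)^2) sums (y * (y * exp y + exp y))" by simp
  then show ?thesis by (subst (asm) sums_Suc_iff) simp
qed


lemma prod_has_sum:
  fixes a b :: "nat \<Rightarrow> real"
  assumes an: "\<And>j. a j \<ge> 0" and bn: "\<And>m. b m \<ge> 0" and as: "a sums A" and bs: "b sums B"
  shows "((\<lambda>(j,m). a j * b m) has_sum (A * B)) UNIV"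
proof -
  have ah: "(a has_sum A) UNIV" by (rule sums_nonneg_imp_has_sum[OF as]) (simp add: an)
  have bh: "(b has_sum B) UNIV" by (rule sums_nonneg_imp_has_sum[OF bs]) (simp add: bn)
  have inner: "((\<lambda>m. (\<lambda>(j,m). a j * b m) (j, m)) has_sum (a j * B)) UNIV" for j
    using has_sum_cmult_right[OF bh, of "a j"] by simp
  have outer: "((\<lambda>j. a j * B) has_sum (A * B)) UNIV" by (rule has_sum_cmult_left[OF ah])
  have summ: "(\<lambda>(j,m). a j * b m) summable_on Sigma UNIV (\<lambda>_. UNIV)"
    by (rule summable_on_SigmaI[OF inner]) (use outer has_sum_imp_summable in \<open>auto intro!: mult_nonneg_nonneg an bn\<close>)
  have "((\<lambda>(j,m). a j * b m) has_sum (A * B)) (Sigma UNIV (\<lambda>_. UNIV))"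
    by (rule has_sum_SigmaI[OF inner outer summ])
  then show ?thesis by simp
qed

lemma rearr:
  fixes G :: "nat \<times> nat \<Rightarrow> real"
  assumes "(G has_sum S) UNIV"
  shows "(\<lambda>k. \<Sum>j\<le>k div 2. G (j, k - 2*j)) sums S"
proof -
  have "((\<lambda>(k,j). G (j, k - 2*j)) has_sum S) (Sigma UNIV (\<lambda>k. {..k div 2}))"
  proof -
    have "(G has_sum S) UNIV = ((\<lambda>(k,j). G (j, k - 2*j)) has_sum S) (Sigma UNIV (\<lambda>k. {..k div 2}))"
      by (rule has_sum_reindex_bij_witness[where i = "\<lambda>(k,j). (j, k - 2*j)" and j = "\<lambda>(j,m). (m + 2*j, j)"])
         auto
    then show ?thesis using assms by simp
  qed
  then have "((\<lambda>k. \<Sum>j\<le>k div 2. G (j, k - 2*j)) has_sum S) UNIV"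
    by (rule has_sum_Sigma') auto
  then show ?thesis by (rule has_sum_imp_sums)
qed


lemma osc:
  fixes g :: "real \<Rightarrow> real"
  assumes "M \<ge> 0" "\<delta> > 0" "\<epsilon> \<ge> 0" "\<bar>g t\<bar> \<le> M" "\<bar>g x\<bar> \<le> M"
    "\<bar>t - x\<bar> < \<delta> \<Longrightarrow> \<bar>g t - g x\<bar> \<le> \<epsilon>"
  shows "\<bar>g t - g x\<bar> \<le> \<epsilon> + 2*M/\<delta>^2 * (t-x)^2"
proof (cases "\<bar>t - x\<bar> < \<delta>")
  case True
  have "0 \<le> 2*M/\<delta>^2 * (t-x)^2" using assms by simp
  then show ?thesis using assms True by linarith
next
  case False
  then have "\<delta>^2 \<le> (t-x)^2" using assms(2)
    by (metis abs_of_pos not_less power2_abs power_mono abs_ge_zero order_less_imp_le)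
  then have "2*M/\<delta>^2 * \<delta>^2 \<le> 2*M/\<delta>^2 * (t-x)^2"
    by (rule mult_left_mono) (use assms in simp)
  then have "2*M \<le> 2*M/\<delta>^2 * (t-x)^2" using assms(2) by simp
  moreover have "\<bar>g t - g x\<bar> \<le> 2*M" using assms(4,5) by linarith
  ultimately show ?thesis using assms(3) by linarith
qed

lemma sq_ge0: "\<mu> \<ge> 0 \<Longrightarrow> sq \<mu> m \<ge> 0"
  using sq_nonneg[of \<mu> m] by simp

lemma theta_sub: "2*j \<le> k \<Longrightarrow> theta (k - 2*j) = theta k"
  unfolding theta_def by auto

lemma weight_eq:
  assumes "\<mu> \<ge> 0"
  shows "hpoly \<mu> k (real n) \<alpha> / gam \<mu> k * x ^ k =
    (\<Sum>j\<le>k div 2. (\<alpha>*x^2)^j / fact j * ((real n * x)^(k-2*j) / gam \<mu> (k-2*j)))"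
proof -
  have gk: "gam \<mu> k \<noteq> 0" using gam_pos[OF assms] by (metis less_irrefl)
  have "hpoly \<mu> k (real n) \<alpha> / gam \<mu> k * x ^ k =
     (\<Sum>j = 0..k div 2. \<alpha> ^ j * real n ^ (k - 2 * j) / (fact j * gam \<mu> (k - 2 * j))) * x^k"
    unfolding hpoly_def using gk by simp
  also have "\<dots> = (\<Sum>j = 0..k div 2. \<alpha> ^ j * real n ^ (k - 2 * j) / (fact j * gam \<mu> (k - 2 * j)) * x^k)"
    by (rule sum_distrib_right)
  also have "\<dots> = (\<Sum>j\<le>k div 2. (\<alpha>*x^2)^j / fact j * ((real n * x)^(k-2*j) / gam \<mu> (k-2*j)))"
    unfolding atMost_atLeast0[symmetric]
  proof (rule sum.cong[OF refl])
    fix j assume "j \<in> {..k div 2}"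
    then have "2*j \<le> k" by auto
    then have xk: "x^k = (x^2)^j * x^(k-2*j)"
      by (metis le_add_diff_inverse power_add power_mult)
    show "\<alpha> ^ j * real n ^ (k - 2 * j) / (fact j * gam \<mu> (k - 2 * j)) * x^k =
          (\<alpha>*x^2)^j / fact j * ((real n * x)^(k-2*j) / gam \<mu> (k-2*j))"
      unfolding xk by (simp add: power_mult_distrib field_simps)
  qed
  finally show ?thesis .
qed


lemma pointwise:
  fixes g :: "real \<Rightarrow> real"
  assumes al: "\<alpha> \<ge> 0" and mu: "\<mu> \<ge> 0" and x0: "x \<ge> 0" and n0: "n > 0"
    and M0: "M \<ge> 0" and d0: "\<delta> > 0" and e0: "\<epsilon> \<ge> 0"
    and gb: "\<And>t. t \<ge> 0 \<Longrightarrow> \<bar>g t\<bar> \<le> M"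
    and uc: "\<And>t. t \<ge> 0 \<Longrightarrow> \<bar>t - x\<bar> < \<delta> \<Longrightarrow> \<bar>g t - g x\<bar> \<le> \<epsilon>"
  shows "\<bar>Top \<alpha> \<mu> n g x - g x\<bar> \<le>
     \<epsilon> + 2*M/\<delta>^2 / (real n)^2 * (2 * ((1 + 2*\<mu>) * (real n * x)) + 8 * ((\<alpha>*x^2) * (\<alpha>*x^2 + 1)))"
proof -
  define y where "y = \<alpha> * x^2"
  define z where "z = real n * x"
  define K where "K = 2*M/\<delta>^2"
  define a where "a j = y^j / fact j" for j
  define b where "b m = z^m / gam \<mu> m" for m
  define t where "t j m = (sq \<mu> m + 2 * real j) / real n" for j m
  define E where "E = exp y * e_mu \<mu> z"
  have y0: "y \<ge> 0" unfolding y_def using al by simp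
  have z0: "z \<ge> 0" unfolding z_def using x0 by simp
  have K0: "K \<ge> 0" unfolding K_def using M0 by simp
  have an: "a j \<ge> 0" for j unfolding a_def using y0 by simp
  have bn: "b m \<ge> 0" for m unfolding b_def using z0 gam_pos[OF mu, of m] by simp
  have as: "a sums exp y" unfolding a_def by (rule a0)
  have bs: "b sums e_mu \<mu> z" unfolding b_def by (rule b_sums[OF mu z0])
  have eb1: "e_mu \<mu> z \<ge> 1"
  proof -
    have "sum b {..<1} \<le> suminf b" by (rule sum_le_suminf) (use bs bn in \<open>auto simp: sums_iff\<close>)
    then show ?thesis using bs gam_0[OF mu] unfolding b_def by (simp add: sums_iff)
  qed
  have Epos: "E > 0" unfolding E_def using eb1 by simp
  have t0: "t j m \<ge> 0" for j m unfolding t_def using sq_ge0[OF mu, of m] n0 by simp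
  define G where "G p = a (fst p) * b (snd p) * g (t (fst p) (snd p))" for p
  define P where "P p = a (fst p) * b (snd p)" for p
  have Ph: "(P has_sum E) UNIV"
    using prod_has_sum[OF an bn as bs] unfolding P_def E_def by (simp add: case_prod_unfold)
  have Gabs: "(\<lambda>p. norm (G p)) summable_on UNIV"
  proof (rule Infinite_Sum.abs_summable_on_comparison_test'[where g = "\<lambda>p. M * P p"])
    show "(\<lambda>p. M * P p) summable_on UNIV" using has_sum_cmult_right[OF Ph] has_sum_imp_summable by blast
    fix p :: "nat \<times> nat"
    have "norm (G p) = P p * \<bar>g (t (fst p) (snd p))\<bar>"
      unfolding G_def P_def using an bn by (simp add: abs_mult)
    also have "\<dots> \<le> P p * M" by (rule mult_left_mono) (use gb t0 an bn P_def in auto)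
    finally show "norm (G p) \<le> M * P p" by (simp add: mult.commute)
  qed
  then have "G summable_on UNIV" by (rule abs_summable_summable)
  then obtain Sg where Gh: "(G has_sum Sg) UNIV" using has_sum_infsum by blast
  have ser: "(\<lambda>k. hpoly \<mu> k (real n) \<alpha> / gam \<mu> k * x ^ k * g ((real k + 2 * \<mu> * theta k) / real n)) sums Sg"
  proof -
    have "(\<lambda>k. \<Sum>j\<le>k div 2. G (j, k - 2*j)) sums Sg" by (rule rearr[OF Gh])
    moreover have "(\<Sum>j\<le>k div 2. G (j, k - 2*j)) =
       hpoly \<mu> k (real n) \<alpha> / gam \<mu> k * x ^ k * g ((real k + 2 * \<mu> * theta k) / real n)" for k
    proof -
      have "(\<Sum>j\<le>k div 2. G (j, k - 2*j)) = (\<Sum>j\<le>k div 2. a j * b (k - 2*j) * g ((real k + 2 * \<mu> * theta k) / real n))"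
      proof (rule sum.cong[OF refl])
        fix j assume "j \<in> {..k div 2}"
        then have jk: "2*j \<le> k" by auto
        have "t j (k - 2*j) = (real k + 2 * \<mu> * theta k) / real n"
          unfolding t_def sq_def theta_sub[OF jk] using jk by (simp add: of_nat_diff)
        then show "G (j, k - 2*j) = a j * b (k - 2*j) * g ((real k + 2 * \<mu> * theta k) / real n)"
          unfolding G_def by simp
      qed
      also have "\<dots> = hpoly \<mu> k (real n) \<alpha> / gam \<mu> k * x ^ k * g ((real k + 2 * \<mu> * theta k) / real n)"
        unfolding weight_eq[OF mu] sum_distrib_right a_def b_def y_def z_def by simp
      finally show ?thesis .
    qed
    ultimately show ?thesis by simp
  qed
  have Top_eq: "Top \<alpha> \<mu> n g x = Sg / E"
    unfolding Top_def E_def y_def[symmetric] z_def[symmetric] using ser by (simp add: sums_iff)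
  define D where "D p = G p + (- g x) * P p" for p
  have Dh: "(D has_sum (Sg + (- g x) * E)) UNIV"
    unfolding D_def by (intro has_sum_add Gh has_sum_cmult_right Ph)
  obtain Vb where Vb: "(\<lambda>m. b m * (sq \<mu> m - z)^2) sums Vb" "Vb \<le> (1 + 2*\<mu>) * z * e_mu \<mu> z"
    using b2[OF mu z0] unfolding b_def by blast
  have Va: "(\<lambda>j. a j * real j^2) sums (y * (y * exp y + exp y))" unfolding a_def by (rule a2)
  define H where "H p = \<epsilon> * P p + K / (real n)^2 *
      (2 * (a (fst p) * (b (snd p) * (sq \<mu> (snd p) - z)^2)) + 8 * ((a (fst p) * real (fst p)^2) * b (snd p)))" for p
  define Hs where "Hs = \<epsilon> * E + K / (real n)^2 * (2 * (exp y * Vb) + 8 * ((y * (y * exp y + exp y)) * e_mu \<mu> z))"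
  have H1: "((\<lambda>p. a (fst p) * (b (snd p) * (sq \<mu> (snd p) - z)^2)) has_sum (exp y * Vb)) UNIV"
    using prod_has_sum[OF an _ as Vb(1)] bn by (simp add: case_prod_unfold)
  have H2: "((\<lambda>p. (a (fst p) * real (fst p)^2) * b (snd p)) has_sum ((y * (y * exp y + exp y)) * e_mu \<mu> z)) UNIV"
    using prod_has_sum[OF _ bn Va bs] an by (simp add: case_prod_unfold)
  have Hh: "(H has_sum Hs) UNIV"
    unfolding H_def Hs_def by (intro has_sum_add has_sum_cmult_right Ph H1 H2)
  have DH: "norm (D p) \<le> H p" for p
  proof -
    obtain j m where p: "p = (j, m)" by (cases p)
    have "D p = P p * (g (t j m) - g x)" unfolding D_def G_def P_def p by (simp add: algebra_simps)
    then have "norm (D p) = P p * \<bar>g (t j m) - g x\<bar>" using an bn unfolding P_def by (simp add: abs_mult)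
    also have "\<dots> \<le> P p * (\<epsilon> + K * (t j m - x)^2)"
      by (rule mult_left_mono) (use osc[of M \<delta> \<epsilon> g "t j m" x, OF M0 d0 e0 gb[OF t0] gb[OF x0] uc[OF t0]] an bn P_def K_def in auto)
    also have "\<dots> \<le> P p * (\<epsilon> + K * ((2 * (sq \<mu> m - z)^2 + 8 * real j^2) / (real n)^2))"
    proof -
      have "t j m - x = ((sq \<mu> m - z) + 2 * real j) / real n"
        unfolding t_def z_def using n0 by (simp add: field_simps)
      then have "(t j m - x)^2 = ((sq \<mu> m - z) + 2 * real j)^2 / (real n)^2"
        by (simp add: power_divide)
      also have "\<dots> \<le> (2 * (sq \<mu> m - z)^2 + 8 * real j^2) / (real n)^2"
      proof (rule divide_right_mono)
        have "0 \<le> ((sq \<mu> m - z) - 2 * real j)^2" by simp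
        then show "((sq \<mu> m - z) + 2 * real j)^2 \<le> 2 * (sq \<mu> m - z)^2 + 8 * real j^2"
          by (simp add: power2_eq_square algebra_simps)
      qed simp
      finally have "K * (t j m - x)^2 \<le> K * ((2 * (sq \<mu> m - z)^2 + 8 * real j^2) / (real n)^2)"
        by (rule mult_left_mono) (rule K0)
      then show ?thesis by (intro mult_left_mono) (use an bn P_def in auto)
    qed
    also have "\<dots> = H p" unfolding H_def P_def p by (simp add: field_simps)
    finally show ?thesis .
  qed
  have "(\<lambda>p. norm (D p)) summable_on UNIV"
    by (rule Infinite_Sum.abs_summable_on_comparison_test'[OF has_sum_imp_summable[OF Hh] DH])
  then obtain N where Nh: "((\<lambda>p. norm (D p)) has_sum N) UNIV" using has_sum_infsum by blast
  have "norm (Sg + (- g x) * E) \<le> N" by (rule norm_has_sum_bound[OF Nh Dh])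
  also have "N \<le> Hs" by (rule has_sum_mono[OF Nh Hh DH])
  finally have main: "\<bar>Sg - g x * E\<bar> \<le> Hs" by simp
  have "\<bar>Top \<alpha> \<mu> n g x - g x\<bar> = \<bar>Sg - g x * E\<bar> / E"
    unfolding Top_eq using Epos by (simp add: field_simps abs_div)
  also have "\<dots> \<le> Hs / E" by (rule divide_right_mono[OF main]) (use Epos in simp)
  also have "Hs / E = \<epsilon> + K / (real n)^2 * (2 * (Vb / e_mu \<mu> z) + 8 * (y * (y + 1)))"
  proof -
    have ne: "e_mu \<mu> z \<noteq> 0" using eb1 by linarith
    show ?thesis unfolding Hs_def E_def using ne n0 by (simp add: field_simps)
  qed
  also have "\<dots> \<le> \<epsilon> + K / (real n)^2 * (2 * ((1 + 2*\<mu>) * z) + 8 * (y * (y + 1)))"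
  proof -
    have "Vb / e_mu \<mu> z \<le> (1 + 2*\<mu>) * z" using Vb(2) eb1 by (simp add: divide_simps)
    then show ?thesis using K0 by (intro add_left_mono mult_left_mono) auto
  qed
  finally show ?thesis unfolding K_def y_def z_def .
qed


theorem theorem4:
  fixes \<alpha> \<mu> :: real and g :: "real \<Rightarrow> real" and A :: "real set"
  assumes "\<alpha> \<ge> 0" and "\<mu> \<ge> 0"
    and "uniformly_continuous_on {0..} g" and "bounded (g ` {0..})"
    and "compact A" and "A \<subseteq> {0..}"
  shows "uniform_limit A (\<lambda>n x. Top \<alpha> \<mu> n g x) g sequentially"
proof (unfold uniform_limit_iff, intro allI impI)
  fix e :: real assume e: "e > 0"
  obtain M0 where M0: "\<forall>y\<in>g ` {0..}. norm y \<le> M0" using assms(4) by (auto simp: bounded_iff)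
  define M where "M = max M0 0"
  have M: "M \<ge> 0" "\<And>t. t \<ge> 0 \<Longrightarrow> \<bar>g t\<bar> \<le> M" using M0 unfolding M_def by (auto simp: le_max_iff_disj)
  obtain R0 where R0: "\<forall>x\<in>A. norm x \<le> R0" using compact_imp_bounded[OF assms(5)] by (auto simp: bounded_iff)
  define R where "R = max R0 0"
  have R: "R \<ge> 0" "\<And>x. x \<in> A \<Longrightarrow> x \<le> R" using R0 unfolding R_def by force+
  obtain \<delta> where d: "\<delta> > 0" and dU: "\<And>x x'. x \<in> {0..} \<Longrightarrow> x' \<in> {0..} \<Longrightarrow> dist x' x < \<delta> \<Longrightarrow> dist (g x') (g x) < e/2"
    using assms(3) e unfolding uniformly_continuous_on_def by (metis half_gt_zero)
  define K where "K = 2*M/\<delta>^2"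
  have K0: "K \<ge> 0" unfolding K_def using M by simp
  define Q where "Q = 2 * ((1 + 2*\<mu>) * R) + 8 * ((\<alpha>*R^2) * (\<alpha>*R^2 + 1))"
  have Q0: "Q \<ge> 0" unfolding Q_def using assms(1,2) R by simp
  obtain N :: nat where N: "real N > 2 * (K * Q) / e" using reals_Archimedean2 by blast
  show "\<forall>\<^sub>F n in sequentially. \<forall>x\<in>A. dist (Top \<alpha> \<mu> n g x) (g x) < e"
  proof (rule eventually_sequentiallyI[of "Suc N"], intro ballI)
    fix n x assume n: "Suc N \<le> n" and x: "x \<in> A"
    have n0: "n > 0" using n by simp
    have x0: "x \<ge> 0" using x assms(6) by auto
    have xR: "x \<le> R" using R x by simp
    have "\<bar>Top \<alpha> \<mu> n g x - g x\<bar> \<le>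
       e/2 + K / (real n)^2 * (2 * ((1 + 2*\<mu>) * (real n * x)) + 8 * ((\<alpha>*x^2) * (\<alpha>*x^2 + 1)))"
      unfolding K_def
    proof (rule pointwise[OF assms(1,2) x0 n0 M(1) d])
      show "0 \<le> e/2" using e by simp
      show "\<And>t. 0 \<le> t \<Longrightarrow> \<bar>g t\<bar> \<le> M" by (rule M(2))
      fix t :: real assume "t \<ge> 0" "\<bar>t - x\<bar> < \<delta>"
      then have "dist (g t) (g x) < e/2" using dU[of x t] x0 by (simp add: dist_real_def)
      then show "\<bar>g t - g x\<bar> \<le> e/2" by (simp add: dist_real_def)
    qed
    also have "\<dots> \<le> e/2 + K / (real n)^2 * (2 * ((1 + 2*\<mu>) * (real n * R)) + 8 * ((\<alpha>*R^2) * (\<alpha>*R^2 + 1)))"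
    proof -
      have x2: "x^2 \<le> R^2" using x0 xR by (simp add: power_mono)
      have ax: "\<alpha>*x^2 \<le> \<alpha>*R^2" using x2 assms(1) by (simp add: mult_left_mono)
      have ax0: "0 \<le> \<alpha>*x^2" using assms(1) by simp
      have "(\<alpha>*x^2) * (\<alpha>*x^2 + 1) \<le> (\<alpha>*R^2) * (\<alpha>*R^2 + 1)"
        by (rule mult_mono) (use ax ax0 in auto)
      moreover have "(1 + 2*\<mu>) * (real n * x) \<le> (1 + 2*\<mu>) * (real n * R)"
        using xR assms(2) by (intro mult_left_mono) auto
      ultimately show ?thesis using K0 by (intro add_left_mono mult_left_mono) auto
    qed
    also have "\<dots> \<le> e/2 + K * Q / real n"
    proof -
      have rn: "real n \<ge> 1" using n0 by simp
      have "K / (real n)^2 * (2 * ((1 + 2*\<mu>) * (real n * R)) + 8 * ((\<alpha>*R^2) * (\<alpha>*R^2 + 1)))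
          = K / real n * (2 * ((1 + 2*\<mu>) * R) + 8 * ((\<alpha>*R^2) * (\<alpha>*R^2 + 1)) / real n)"
        using rn by (simp add: field_simps power2_eq_square)
      also have "\<dots> \<le> K / real n * Q"
      proof -
        have "8 * ((\<alpha>*R^2) * (\<alpha>*R^2 + 1)) / real n \<le> 8 * ((\<alpha>*R^2) * (\<alpha>*R^2 + 1))"
          using rn assms(1) by (intro divide_le_eq_1_pos[THEN iffD2] div_by_1 divide_left_mono[of 1 "real n", simplified]) (auto)
        then show ?thesis unfolding Q_def using K0 rn by (intro mult_left_mono add_left_mono) auto
      qed
      finally show ?thesis by simp
    qed
    also have "\<dots> < e/2 + e/2"
    proof -
      have "real n > 2 * (K * Q) / e" using N n by linarith
      then have "K * Q / real n < e/2" using e n0 by (simp add: field_simps)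
      then show ?thesis by linarith
    qed
    finally show "dist (Top \<alpha> \<mu> n g x) (g x) < e" by (simp add: dist_real_def)
  qed
qed

end
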